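(* Let $\Omega\subset G$ be a regular elliptic conjugacy class and $x\in X$ with $d(x)>d(\Omega)$. Then $I_\Omega(\mu)=0$ for every $\mu\in\mathcal H'_x$.
   Context: $F$ non-archimedean local field with ring of integers $\mathcal O$, maximal ideal $\mathcal P$; $G=\mathrm{PGL}(2,F)$ with Haar measure $dg$, $K$ the image of $\mathrm{GL}(2,\mathcal O)$. $X$: smooth characters of $\mathcal O^\times$; $U_0=\mathcal O^\times$, $U_r=1+\mathcal P^r$; $d(x)$ least $r\ge0$ with $x^2|_{U_r}=1$. For $d\ge1$, $\Gamma_d$ is the image of $\{g\in\mathrm{GL}(2,\mathcal O):g_{21}\in\mathcal P^d\}$, $\Gamma_0=K$; $\tilde x(\gamma)=x(\tilde\gamma_{11}^2/\det\tilde\gamma)$ is a character of $\Gamma_{d(x)}$ when $d(x)>0$. $\mathcal H'_x$: measures $\varphi\,dg$ ($\varphi$ locally constant, compactly supported) with $\varphi(\gamma g)=\varphi(g\gamma)=\tilde x(\gamma)\varphi(g)$ for $\gamma\in\Gamma_{d(x)}$. For a regular elliptic conjugacy class $\Omega$ and $h\in\Omega$, $I_\Omega(\varphi\,dg)=\int_G\varphi(ghg^{-1})\,dg$, and $d(\Omega)$ is the largest $d\ge0$ with $\Omega\cap\Gamma_d\neq\emptyset$. *)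

theory Defs
  imports "HOL-Analysis.Analysis" "HOL-Computational_Algebra.Polynomial"
begin

text \<open>The field F is a type 'f of class field; v is its normalized discrete
valuation (only its values at nonzero elements matter).\<close>

definition Pideal :: "('f::field \<Rightarrow> int) \<Rightarrow> int \<Rightarrow> 'f set" where
  "Pideal v n = {a. a = 0 \<or> n \<le> v a}"

abbreviation Oring :: "('f::field \<Rightarrow> int) \<Rightarrow> 'f set" where
  "Oring v \<equiv> Pideal v 0"

definition Ounits :: "('f::field \<Rightarrow> int) \<Rightarrow> 'f set" where
  "Ounits v = {a. a \<noteq> 0 \<and> v a = 0}"

definition nonarch_local_field :: "('f::field \<Rightarrow> int) \<Rightarrow> bool" where
  "nonarch_local_field v \<longleftrightarrow>
     (\<forall>a b. a \<noteq> 0 \<longrightarrow> b \<noteq> 0 \<longrightarrow> v (a * b) = v a + v b) \<and>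
     (\<forall>a b. a \<noteq> 0 \<longrightarrow> b \<noteq> 0 \<longrightarrow> a + b \<noteq> 0 \<longrightarrow> min (v a) (v b) \<le> v (a + b)) \<and>
     (\<exists>\<pi>. \<pi> \<noteq> 0 \<and> v \<pi> = 1) \<and>
     (\<exists>S. finite S \<and> S \<subseteq> Oring v \<and> (\<forall>a\<in>Oring v. \<exists>s\<in>S. a - s \<in> Pideal v 1)) \<and>
     (\<forall>s :: nat \<Rightarrow> 'f.
        (\<forall>N. \<exists>M. \<forall>m\<ge>M. \<forall>n\<ge>M. s m - s n \<in> Pideal v N) \<longrightarrow>
        (\<exists>L. \<forall>N. \<exists>M. \<forall>n\<ge>M. s n - L \<in> Pideal v N))"

definition val_topology :: "('f::field \<Rightarrow> int) \<Rightarrow> 'f topology" where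
  "val_topology v = topology (\<lambda>S. \<forall>a\<in>S. \<exists>N. {b. b - a \<in> Pideal v N} \<subseteq> S)"

lemma Pideal_mono: "N \<le> M \<Longrightarrow> Pideal v M \<subseteq> Pideal v N"
  unfolding Pideal_def by auto

lemma istopology_val: "istopology (\<lambda>S. \<forall>a\<in>S. \<exists>N. {b. b - a \<in> Pideal v N} \<subseteq> S)"
  unfolding istopology_def
proof (rule conjI; intro allI impI)
  fix S T :: "'a set"
  assume S: "\<forall>a\<in>S. \<exists>N. {b. b - a \<in> Pideal v N} \<subseteq> S"
     and T: "\<forall>a\<in>T. \<exists>N. {b. b - a \<in> Pideal v N} \<subseteq> T"
  show "\<forall>a\<in>S \<inter> T. \<exists>N. {b. b - a \<in> Pideal v N} \<subseteq> S \<inter> T"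
  proof
    fix a assume a: "a \<in> S \<inter> T"
    obtain N1 where 1: "{b. b - a \<in> Pideal v N1} \<subseteq> S"
      using S a by blast
    obtain N2 where 2: "{b. b - a \<in> Pideal v N2} \<subseteq> T"
      using T a by blast
    have m1: "Pideal v (max N1 N2) \<subseteq> Pideal v N1" by (rule Pideal_mono) simp
    have m2: "Pideal v (max N1 N2) \<subseteq> Pideal v N2" by (rule Pideal_mono) simp
    have "{b. b - a \<in> Pideal v (max N1 N2)} \<subseteq> S \<inter> T"
      using 1 2 m1 m2 by blast
    then show "\<exists>N. {b. b - a \<in> Pideal v N} \<subseteq> S \<inter> T" by (rule exI)
  qed
next
  fix K :: "'a set set"
  assume K: "\<forall>S\<in>K. \<forall>a\<in>S. \<exists>N. {b. b - a \<in> Pideal v N} \<subseteq> S"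
  show "\<forall>a\<in>\<Union>K. \<exists>N. {b. b - a \<in> Pideal v N} \<subseteq> \<Union>K"
  proof
    fix a assume "a \<in> \<Union>K"
    then obtain S where S: "S \<in> K" "a \<in> S" by blast
    then obtain N where "{b. b - a \<in> Pideal v N} \<subseteq> S" using K by blast
    then have "{b. b - a \<in> Pideal v N} \<subseteq> \<Union>K" using S by blast
    then show "\<exists>N. {b. b - a \<in> Pideal v N} \<subseteq> \<Union>K" by (rule exI)
  qed
qed

text \<open>A matrix [[a,b],[c,d]] is represented by the tuple (a,b,c,d).\<close>

type_synonym 'f mat2 = "'f \<times> 'f \<times> 'f \<times> 'f"

fun mdet :: "'f::field mat2 \<Rightarrow> 'f" where
  "mdet (a, b, c, d) = a * d - b * c"

fun mtr :: "'f::field mat2 \<Rightarrow> 'f" where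
  "mtr (a, b, c, d) = a + d"

fun mmul :: "'f::field mat2 \<Rightarrow> 'f mat2 \<Rightarrow> 'f mat2" where
  "mmul (a, b, c, d) (a', b', c', d') =
     (a * a' + b * c', a * b' + b * d', c * a' + d * c', c * b' + d * d')"

fun madj :: "'f::field mat2 \<Rightarrow> 'f mat2" where
  "madj (a, b, c, d) = (d, - b, - c, a)"

fun msc :: "'f::field \<Rightarrow> 'f mat2 \<Rightarrow> 'f mat2" where
  "msc t (a, b, c, d) = (t * a, t * b, t * c, t * d)"

definition GL2 :: "'f::field mat2 set" where
  "GL2 = {m. mdet m \<noteq> 0}"

text \<open>Elements of G = PGL(2,F) are the classes of invertible matrices modulo
nonzero scalars.\<close>

definition cls :: "'f::field mat2 \<Rightarrow> 'f mat2 set" where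
  "cls m = {msc t m | t. t \<noteq> 0}"

definition PGL2 :: "'f::field mat2 set set" where
  "PGL2 = cls ` GL2"

definition rep :: "'f::field mat2 set \<Rightarrow> 'f mat2" where
  "rep g = (SOME m. m \<in> g)"

definition gmul :: "'f::field mat2 set \<Rightarrow> 'f mat2 set \<Rightarrow> 'f mat2 set" where
  "gmul g h = cls (mmul (rep g) (rep h))"

definition ginv :: "'f::field mat2 set \<Rightarrow> 'f mat2 set" where
  "ginv g = cls (madj (rep g))"

definition gconj :: "'f::field mat2 set \<Rightarrow> 'f mat2 set \<Rightarrow> 'f mat2 set" where
  "gconj g h = gmul (gmul g h) (ginv g)"

definition mat_topology :: "('f::field \<Rightarrow> int) \<Rightarrow> 'f mat2 topology" where
  "mat_topology v = subtopology
     (prod_topology (val_topology v) (prod_topology (val_topology v)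
        (prod_topology (val_topology v) (val_topology v)))) GL2"

definition G_topology :: "('f::field \<Rightarrow> int) \<Rightarrow> 'f mat2 set topology" where
  "G_topology v = topology (\<lambda>U. U \<subseteq> PGL2 \<and> openin (mat_topology v) {m \<in> GL2. cls m \<in> U})"

lemma istopology_G: "istopology (\<lambda>U. U \<subseteq> PGL2 \<and> openin (mat_topology v) {m \<in> GL2. cls m \<in> U})"
  unfolding istopology_def
proof (rule conjI; intro allI impI)
  fix S T
  assume S: "S \<subseteq> PGL2 \<and> openin (mat_topology v) {m \<in> GL2. cls m \<in> S}"
    and T: "T \<subseteq> PGL2 \<and> openin (mat_topology v) {m \<in> GL2. cls m \<in> T}"
  have "{m \<in> GL2. cls m \<in> S \<inter> T} = {m \<in> GL2. cls m \<in> S} \<inter> {m \<in> GL2. cls m \<in> T}" by blast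
  then show "S \<inter> T \<subseteq> PGL2 \<and> openin (mat_topology v) {m \<in> GL2. cls m \<in> S \<inter> T}"
    using S T by auto
next
  fix K
  assume K: "\<forall>U\<in>K. U \<subseteq> PGL2 \<and> openin (mat_topology v) {m \<in> GL2. cls m \<in> U}"
  have "{m \<in> GL2. cls m \<in> \<Union>K} = (\<Union>U\<in>K. {m \<in> GL2. cls m \<in> U})" by blast
  moreover have "openin (mat_topology v) (\<Union>U\<in>K. {m \<in> GL2. cls m \<in> U})"
    using K by (intro openin_Union) auto
  ultimately show "\<Union>K \<subseteq> PGL2 \<and> openin (mat_topology v) {m \<in> GL2. cls m \<in> \<Union>K}"
    using K by auto
qed

definition haar_measure :: "('f::field \<Rightarrow> int) \<Rightarrow> 'f mat2 set measure \<Rightarrow> bool" where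
  "haar_measure v M \<longleftrightarrow>
     space M = PGL2 \<and>
     sets M = sigma_sets PGL2 {U. openin (G_topology v) U} \<and>
     (\<forall>g\<in>PGL2. \<forall>A\<in>sets M. emeasure M (gmul g ` A) = emeasure M A) \<and>
     (\<forall>C. compactin (G_topology v) C \<longrightarrow> emeasure M C < \<infinity>) \<and>
     (\<forall>U. openin (G_topology v) U \<longrightarrow> U \<noteq> {} \<longrightarrow> emeasure M U > 0)"

definition Ugrp :: "('f::field \<Rightarrow> int) \<Rightarrow> nat \<Rightarrow> 'f set" where
  "Ugrp v r = {a \<in> Ounits v. a - 1 \<in> Pideal v (int r)}"

text \<open>Smooth characters of O^x (values only on O^x matter).\<close>

definition smooth_char :: "('f::field \<Rightarrow> int) \<Rightarrow> ('f \<Rightarrow> complex) \<Rightarrow> bool" where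
  "smooth_char v x \<longleftrightarrow>
     (\<forall>a\<in>Ounits v. \<forall>b\<in>Ounits v. x (a * b) = x a * x b) \<and>
     (\<forall>a\<in>Ounits v. x a \<noteq> 0) \<and>
     (\<exists>r. \<forall>u\<in>Ugrp v r. x u = 1)"

definition dchar :: "('f::field \<Rightarrow> int) \<Rightarrow> ('f \<Rightarrow> complex) \<Rightarrow> nat" where
  "dchar v x = (LEAST r. \<forall>u\<in>Ugrp v r. (x u)\<^sup>2 = 1)"

definition Gamma_lift :: "('f::field \<Rightarrow> int) \<Rightarrow> nat \<Rightarrow> 'f mat2 set" where
  "Gamma_lift v d = {(a, b, c, e). a \<in> Oring v \<and> b \<in> Oring v \<and> c \<in> Pideal v (int d) \<and>
      e \<in> Oring v \<and> mdet (a, b, c, e) \<in> Ounits v}"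

definition Gamma :: "('f::field \<Rightarrow> int) \<Rightarrow> nat \<Rightarrow> 'f mat2 set set" where
  "Gamma v d = cls ` Gamma_lift v d"

definition xtilde :: "('f::field \<Rightarrow> int) \<Rightarrow> ('f \<Rightarrow> complex) \<Rightarrow> nat \<Rightarrow> 'f mat2 set \<Rightarrow> complex" where
  "xtilde v x d \<gamma> =
     (let m = (SOME m. m \<in> \<gamma> \<and> m \<in> Gamma_lift v d) in x ((fst m)\<^sup>2 / mdet m))"

definition locally_constant_on_G :: "('f::field \<Rightarrow> int) \<Rightarrow> ('f mat2 set \<Rightarrow> complex) \<Rightarrow> bool" where
  "locally_constant_on_G v \<phi> \<longleftrightarrow>
     (\<forall>g\<in>PGL2. \<exists>U. openin (G_topology v) U \<and> g \<in> U \<and> (\<forall>g'\<in>U. \<phi> g' = \<phi> g))"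

definition compact_support_on_G :: "('f::field \<Rightarrow> int) \<Rightarrow> ('f mat2 set \<Rightarrow> complex) \<Rightarrow> bool" where
  "compact_support_on_G v \<phi> \<longleftrightarrow>
     (\<exists>C. compactin (G_topology v) C \<and> (\<forall>g\<in>PGL2. g \<notin> C \<longrightarrow> \<phi> g = 0))"

text \<open>Densities phi of the measures phi dg in H'_x.\<close>

definition Hprime :: "('f::field \<Rightarrow> int) \<Rightarrow> ('f \<Rightarrow> complex) \<Rightarrow> ('f mat2 set \<Rightarrow> complex) set" where
  "Hprime v x = {\<phi>. locally_constant_on_G v \<phi> \<and> compact_support_on_G v \<phi> \<and>
      (\<forall>\<gamma>\<in>Gamma v (dchar v x). \<forall>g\<in>PGL2.
          \<phi> (gmul \<gamma> g) = xtilde v x (dchar v x) \<gamma> * \<phi> g \<and>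
          \<phi> (gmul g \<gamma>) = xtilde v x (dchar v x) \<gamma> * \<phi> g)}"

definition regular_elliptic :: "'f::field mat2 set \<Rightarrow> bool" where
  "regular_elliptic h \<longleftrightarrow> h \<in> PGL2 \<and>
     irreducible [:mdet (rep h), - mtr (rep h), 1:] \<and>
     (mtr (rep h))\<^sup>2 \<noteq> 4 * mdet (rep h)"

definition conj_class :: "'f::field mat2 set \<Rightarrow> 'f mat2 set set" where
  "conj_class h = {gconj g h | g. g \<in> PGL2}"

definition regular_elliptic_class :: "'f::field mat2 set set \<Rightarrow> bool" where
  "regular_elliptic_class \<Omega> \<longleftrightarrow> (\<exists>h. regular_elliptic h \<and> \<Omega> = conj_class h)"

definition dclass :: "('f::field \<Rightarrow> int) \<Rightarrow> 'f mat2 set set \<Rightarrow> nat" where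
  "dclass v \<Omega> = (GREATEST d. \<Omega> \<inter> Gamma v d \<noteq> {})"

definition orbital_integral ::
  "'f::field mat2 set measure \<Rightarrow> 'f mat2 set \<Rightarrow> ('f mat2 set \<Rightarrow> complex) \<Rightarrow> complex" where
  "orbital_integral M h \<phi> = integral\<^sup>L M (\<lambda>g. \<phi> (gconj g h))"

end

theory Submission
  imports Defs
begin


locale NA = fixes v :: "'f::field \<Rightarrow> int" assumes na: "nonarch_local_field v"
begin

lemma vmul: "a \<noteq> 0 \<Longrightarrow> b \<noteq> 0 \<Longrightarrow> v (a * b) = v a + v b"
  using na unfolding nonarch_local_field_def by blast

lemma ultra: "a \<noteq> 0 \<Longrightarrow> b \<noteq> 0 \<Longrightarrow> a + b \<noteq> 0 \<Longrightarrow> min (v a) (v b) \<le> v (a + b)"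
  using na unfolding nonarch_local_field_def by blast

lemma complete: "(\<forall>N. \<exists>M. \<forall>m\<ge>M. \<forall>n\<ge>M. (s :: nat \<Rightarrow> 'f) m - s n \<in> Pideal v N) \<Longrightarrow>
        (\<exists>L. \<forall>N. \<exists>M. \<forall>n\<ge>M. s n - L \<in> Pideal v N)"
proof -
  assume a: "\<forall>N. \<exists>M. \<forall>m\<ge>M. \<forall>n\<ge>M. s m - s n \<in> Pideal v N"
  have "\<forall>s :: nat \<Rightarrow> 'f. (\<forall>N. \<exists>M. \<forall>m\<ge>M. \<forall>n\<ge>M. s m - s n \<in> Pideal v N) \<longrightarrow>
        (\<exists>L. \<forall>N. \<exists>M. \<forall>n\<ge>M. s n - L \<in> Pideal v N)"
    using na unfolding nonarch_local_field_def by (elim conjE)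
  then show ?thesis using a by blast
qed

lemma v1: "v 1 = 0"
  using vmul[of 1 1] by simp

lemma vinv: "a \<noteq> 0 \<Longrightarrow> v (inverse a) = - v a"
  using vmul[of a "inverse a"] v1 by simp

lemma vdiv: "a \<noteq> 0 \<Longrightarrow> b \<noteq> 0 \<Longrightarrow> v (a / b) = v a - v b"
  by (simp add: divide_inverse vmul vinv)

lemma vm1: "v (-1) = 0"
  using vmul[of "-1" "-1"] v1 by simp

lemma vneg: "v (- a) = v a"
proof (cases "a = 0")
  case False
  then show ?thesis using vmul[of "-1" a] vm1 by simp
qed simp

lemma P0[simp]: "0 \<in> Pideal v n" by (simp add: Pideal_def)

lemma P_neg: "x \<in> Pideal v n \<Longrightarrow> - x \<in> Pideal v n"
  by (auto simp: Pideal_def vneg)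

lemma P_neg_iff[simp]: "- x \<in> Pideal v n \<longleftrightarrow> x \<in> Pideal v n"
  using P_neg[of x n] P_neg[of "-x" n] by auto

lemma P_add: "x \<in> Pideal v n \<Longrightarrow> y \<in> Pideal v n \<Longrightarrow> x + y \<in> Pideal v n"
proof -
  assume x: "x \<in> Pideal v n" and y: "y \<in> Pideal v n"
  show ?thesis
  proof (cases "x = 0 \<or> y = 0 \<or> x + y = 0")
    case True then show ?thesis using x y by auto
  next
    case False
    then have "min (v x) (v y) \<le> v (x + y)" using ultra by auto
    then show ?thesis using x y False by (auto simp: Pideal_def)
  qed
qed

lemma P_diff: "x \<in> Pideal v n \<Longrightarrow> y \<in> Pideal v n \<Longrightarrow> x - y \<in> Pideal v n"
  using P_add[of x n "-y"] by simp

lemma P_mult: "x \<in> Pideal v m \<Longrightarrow> y \<in> Pideal v n \<Longrightarrow> x * y \<in> Pideal v (m + n)"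
  by (cases "x = 0 \<or> y = 0") (auto simp: Pideal_def vmul)

lemma P_mult': "x \<in> Pideal v m \<Longrightarrow> y \<in> Pideal v n \<Longrightarrow> k = m + n \<Longrightarrow> x * y \<in> Pideal v k"
  using P_mult by simp

lemma P_mono: "n \<le> m \<Longrightarrow> x \<in> Pideal v m \<Longrightarrow> x \<in> Pideal v n"
  by (auto simp: Pideal_def)

lemma P1: "1 \<in> Pideal v 0" by (simp add: Pideal_def v1)

lemma P_Ointo: "x \<in> Pideal v 0 \<Longrightarrow> y \<in> Pideal v n \<Longrightarrow> x * y \<in> Pideal v n"
  using P_mult[of x 0 y n] by simp

lemma P_intoO: "x \<in> Pideal v n \<Longrightarrow> y \<in> Pideal v 0 \<Longrightarrow> x * y \<in> Pideal v n"
  using P_mult[of x n y 0] by simp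

lemma P_numeral: "numeral k \<in> Pideal v 0"
proof (induction k)
  case One then show ?case using P1 by simp
next
  case (Bit0 k) then show ?case using P_add[of "numeral k" 0 "numeral k"] by (simp add: numeral_Bit0)
next
  case (Bit1 k) then show ?case using P_add[of "numeral k" 0 "numeral k"] P_add P1
    by (metis numeral_Bit1)
qed

lemma notP_inv: "x \<noteq> 0 \<Longrightarrow> x \<notin> Pideal v n \<Longrightarrow> inverse x \<in> Pideal v (1 - n)"
  by (auto simp: Pideal_def vinv)

lemma notP_div: "a \<noteq> 0 \<Longrightarrow> b \<noteq> 0 \<Longrightarrow> a / b \<notin> Pideal v n \<Longrightarrow> b / a \<in> Pideal v (1 - n)"
  using notP_inv[of "a/b" n] by simp

lemma notP_ne: "x \<notin> Pideal v n \<Longrightarrow> x \<noteq> 0" by auto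

lemma strict_ultra:
  assumes "x \<noteq> 0" "v x < n" "y \<in> Pideal v n"
  shows "x + y \<noteq> 0 \<and> v (x + y) = v x"
proof (cases "y = 0")
  case True then show ?thesis using assms by simp
next
  case False
  then have vy: "n \<le> v y" using assms by (simp add: Pideal_def)
  have ne: "x + y \<noteq> 0"
  proof
    assume "x + y = 0" then have "y = - x" using minus_unique by metis
    then show False using vy assms vneg by simp
  qed
  have "min (v x) (v y) \<le> v (x + y)" using ultra ne False assms by auto
  then have ge: "v x \<le> v (x + y)" using vy assms by simp
  have "min (v (x + y)) (v (- y)) \<le> v (x + y + - y)"
    using ultra[of "x+y" "-y"] ne False assms by simp
  then have "v x \<le> v (x+y)" "min (v (x + y)) (v y) \<le> v x" using ge by (simp_all add: vneg)
  then show ?thesis using ne vy assms by linarith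
qed

lemma Ounits_iff: "u \<in> Ounits v \<longleftrightarrow> u \<in> Pideal v 0 \<and> u \<noteq> 0 \<and> inverse u \<in> Pideal v 0"
  by (auto simp: Ounits_def Pideal_def vinv)

lemma Ounits_O: "u \<in> Ounits v \<Longrightarrow> u \<in> Pideal v 0" by (simp add: Ounits_iff)
lemma Ounits_nz: "u \<in> Ounits v \<Longrightarrow> u \<noteq> 0" by (simp add: Ounits_def)
lemma Ounits_inv: "u \<in> Ounits v \<Longrightarrow> inverse u \<in> Ounits v"
  by (auto simp: Ounits_def vinv)
lemma Ounits_mult: "u \<in> Ounits v \<Longrightarrow> w \<in> Ounits v \<Longrightarrow> u * w \<in> Ounits v"
  by (auto simp: Ounits_def vmul)
lemma Ounits_div: "u \<in> Ounits v \<Longrightarrow> w \<in> Ounits v \<Longrightarrow> u / w \<in> Ounits v"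
  by (simp add: divide_inverse Ounits_mult Ounits_inv)

lemma one_plus_P: "w \<in> Pideal v 1 \<Longrightarrow> 1 + w \<in> Ounits v"
  using strict_ultra[of 1 1 w] v1 by (simp add: Ounits_def)

lemma one_minus_P: "w \<in> Pideal v 1 \<Longrightarrow> 1 - w \<in> Ounits v"
  using one_plus_P[of "-w"] by simp

lemma unit_plus_P: "u \<in> Ounits v \<Longrightarrow> w \<in> Pideal v 1 \<Longrightarrow> u + w \<in> Ounits v"
  using strict_ultra[of u 1 w] by (simp add: Ounits_def)

lemma Ounits_P_iff: "u \<in> Ounits v \<Longrightarrow> (u * y \<in> Pideal v n \<longleftrightarrow> y \<in> Pideal v n)"
  by (cases "y = 0") (auto simp: Ounits_def Pideal_def vmul)

lemma P_zero_all: "(\<forall>N. y \<in> Pideal v N) \<Longrightarrow> y = 0"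
  by (auto simp: Pideal_def) (metis add1_zle_eq less_add_one not_less)

end


context NA begin

lemma P_of_v: "x \<noteq> 0 \<Longrightarrow> x \<in> Pideal v (v x)" by (simp add: Pideal_def)

lemma hensel:
  fixes T Dt a0 :: 'f and m :: int
  assumes fd0: "2*a0 - T \<noteq> 0" and vm: "v (2*a0 - T) = m"
    and f0: "a0^2 - T*a0 + Dt \<in> Pideal v (2*m+1)"
  shows "\<exists>r. r^2 - T*r + Dt = 0"
proof -
  define f where "f X = X^2 - T*X + Dt" for X
  define fd where "fd X = 2*X - T" for X
  define step where "step a = a - f a / fd a" for a
  define s where "s n = (step ^^ n) a0" for n
  have sS: "s (Suc n) = step (s n)" for n by (simp add: s_def)
  have inv: "fd (s n) \<noteq> 0 \<and> v (fd (s n)) = m \<and> f (s n) \<in> Pideal v (2*m+1+int n)" for n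
  proof (induction n)
    case 0 then show ?case using fd0 vm f0 by (simp add: s_def f_def fd_def)
  next
    case (Suc n)
    define a where "a = s n"
    define h where "h = - f a / fd a"
    have IH: "fd a \<noteq> 0" "v (fd a) = m" "f a \<in> Pideal v (2*m+1+int n)" using Suc by (auto simp: a_def)
    have hP: "h \<in> Pideal v (m+1+int n)"
    proof -
      have "inverse (fd a) \<in> Pideal v (-m)" using IH by (simp add: Pideal_def vinv)
      then have "(- f a) * inverse (fd a) \<in> Pideal v (2*m+1+int n + (-m))"
        using P_mult IH(3) P_neg by blast
      then show ?thesis by (simp add: h_def divide_inverse algebra_simps)
    qed
    have sa: "s (Suc n) = a + h" by (simp add: sS step_def a_def h_def)
    have e1: "f (a + h) = f a + fd a * h + h^2"
      by (simp add: f_def fd_def algebra_simps power2_eq_square)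
    have e2: "fd a * h = - f a" using IH(1) by (simp add: h_def)
    have fah: "f (a + h) = h^2" using e1 e2 by simp
    have "h * h \<in> Pideal v ((m+1+int n) + (m+1+int n))" using P_mult hP by blast
    then have f1: "f (a + h) \<in> Pideal v (2*m+1+int (Suc n))"
      by (simp add: fah power2_eq_square) (rule P_mono[rotated], assumption, simp)
    have "2 * h \<in> Pideal v (0 + (m+1+int n))" using P_mult P_numeral hP by blast
    then have "2 * h \<in> Pideal v (m+1)" by (rule P_mono[rotated]) simp
    then have "fd a + 2*h \<noteq> 0 \<and> v (fd a + 2*h) = v (fd a)"
      using strict_ultra[of "fd a" "m+1" "2*h"] IH by simp
    moreover have "fd (a+h) = fd a + 2*h" by (simp add: fd_def algebra_simps)
    ultimately show ?case using f1 IH by (simp add: sa)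
  qed
  have stepP: "s (Suc n) - s n \<in> Pideal v (m+1+int n)" for n
  proof -
    have I: "fd (s n) \<noteq> 0" "v (fd (s n)) = m" "f (s n) \<in> Pideal v (2*m+1+int n)" using inv by auto
    have "inverse (fd (s n)) \<in> Pideal v (-m)" using I by (simp add: Pideal_def vinv)
    then have "(- f (s n)) * inverse (fd (s n)) \<in> Pideal v (2*m+1+int n + (-m))"
      using P_mult I(3) P_neg by blast
    then show ?thesis by (simp add: sS step_def divide_inverse algebra_simps)
  qed
  have far: "s k - s n \<in> Pideal v (m+1+int n)" if "n \<le> k" for n k
    using that
  proof (induction k)
    case 0 then show ?case by simp
  next
    case (Suc k)
    show ?case
    proof (cases "n = Suc k")
      case True then show ?thesis by simp
    next
      case False
      then have "n \<le> k" using Suc by simp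
      then have a: "s k - s n \<in> Pideal v (m+1+int n)" using Suc by simp
      have "s (Suc k) - s k \<in> Pideal v (m+1+int n)"
        using P_mono[OF _ stepP[of k]] \<open>n \<le> k\<close> by simp
      from P_add[OF this a] show ?thesis by simp
    qed
  qed
  have cauchy: "\<forall>N. \<exists>M. \<forall>i\<ge>M. \<forall>j\<ge>M. s i - s j \<in> Pideal v N"
  proof
    fix N
    define M where "M = nat (\<bar>N\<bar> + \<bar>m\<bar>)"
    have "\<forall>i\<ge>M. \<forall>j\<ge>M. s i - s j \<in> Pideal v N"
    proof (intro allI impI)
      fix i j assume "M \<le> i" "M \<le> j"
      then have "s i - s M \<in> Pideal v (m+1+int M)" "s j - s M \<in> Pideal v (m+1+int M)"
        using far by auto
      from P_diff[OF this] have "s i - s j \<in> Pideal v (m+1+int M)" by simp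
      then show "s i - s j \<in> Pideal v N" by (rule P_mono[rotated]) (simp add: M_def)
    qed
    then show "\<exists>M. \<forall>i\<ge>M. \<forall>j\<ge>M. s i - s j \<in> Pideal v N" by blast
  qed
  obtain L where L: "\<forall>N. \<exists>M. \<forall>n\<ge>M. s n - L \<in> Pideal v N"
    using complete[OF cauchy] by blast
  have "f L \<in> Pideal v N" for N
  proof -
    define N' where "N' = \<bar>N\<bar> + \<bar>m\<bar> + 1"
    obtain M where M: "\<forall>n\<ge>M. s n - L \<in> Pideal v N'" using L by blast
    define n where "n = max M (nat (\<bar>N\<bar> + 2*\<bar>m\<bar>))"
    have dn: "L - s n \<in> Pideal v N'" using M P_neg[of "s n - L"] by (simp add: n_def)
    have I: "fd (s n) \<noteq> 0" "v (fd (s n)) = m" "f (s n) \<in> Pideal v (2*m+1+int n)" using inv by auto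
    have id: "f L = f (s n) + fd (s n) * (L - s n) + (L - s n) * (L - s n)"
      by (simp add: f_def fd_def algebra_simps power2_eq_square)
    have t1: "f (s n) \<in> Pideal v N" using I(3) by (rule P_mono[rotated]) (simp add: n_def)
    have "fd (s n) \<in> Pideal v m" using I P_of_v by metis
    then have "fd (s n) * (L - s n) \<in> Pideal v (m + N')" using P_mult dn by blast
    then have t2: "fd (s n) * (L - s n) \<in> Pideal v N" by (rule P_mono[rotated]) (simp add: N'_def)
    have "(L - s n) * (L - s n) \<in> Pideal v (N' + N')" using P_mult dn by blast
    then have t3: "(L - s n) * (L - s n) \<in> Pideal v N" by (rule P_mono[rotated]) (simp add: N'_def)
    show ?thesis using id P_add[OF P_add[OF t1 t2] t3] by simp
  qed
  then have "f L = 0" using P_zero_all by blast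
  then show ?thesis by (auto simp: f_def)
qed

end


lemma msc_msc[simp]: "msc s (msc t M) = msc (s*t) M"
  by (cases M rule: prod_cases4) (simp add: algebra_simps)
lemma msc_1[simp]: "msc 1 M = M"
  by (cases M rule: prod_cases4) simp
lemma mmul_msc_l[simp]: "mmul (msc t A) B = msc t (mmul A B)"
  by (cases A rule: prod_cases4, cases B rule: prod_cases4) (simp add: algebra_simps)
lemma mmul_msc_r[simp]: "mmul A (msc t B) = msc t (mmul A B)"
  by (cases A rule: prod_cases4, cases B rule: prod_cases4) (simp add: algebra_simps)
lemma madj_msc[simp]: "madj (msc t A) = msc t (madj A)"
  by (cases A rule: prod_cases4) simp
lemma mdet_msc[simp]: "mdet (msc t A) = t^2 * mdet A"
  by (cases A rule: prod_cases4) (simp add: algebra_simps power2_eq_square)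
lemma mtr_msc[simp]: "mtr (msc t A) = t * mtr A"
  by (cases A rule: prod_cases4) (simp add: algebra_simps)
lemma mdet_mmul[simp]: "mdet (mmul A B) = mdet A * mdet B"
  by (cases A rule: prod_cases4, cases B rule: prod_cases4) (simp add: algebra_simps)
lemma mmul_assoc: "mmul (mmul A B) C = mmul A (mmul B C)"
  by (cases A rule: prod_cases4, cases B rule: prod_cases4, cases C rule: prod_cases4) (simp add: algebra_simps)
lemma madj_mmul: "madj (mmul A B) = mmul (madj B) (madj A)"
  by (cases A rule: prod_cases4, cases B rule: prod_cases4) (simp add: algebra_simps)
lemma mmul_madj: "mmul A (madj A) = msc (mdet A) (1,0,0,1)"
  by (cases A rule: prod_cases4) (simp add: algebra_simps)
lemma mmul_madj_l: "mmul (madj A) A = msc (mdet A) (1,0,0,1)"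
  by (cases A rule: prod_cases4) (simp add: algebra_simps)
lemma mmul_id_l[simp]: "mmul (1,0,0,1) A = A"
  by (cases A rule: prod_cases4) simp
lemma mmul_id_r[simp]: "mmul A (1,0,0,1) = A"
  by (cases A rule: prod_cases4) simp
lemma mtr_conj: "mtr (mmul (mmul A B) (madj A)) = mdet A * mtr B"
  by (cases A rule: prod_cases4, cases B rule: prod_cases4) (simp add: algebra_simps)
lemma mdet_madj[simp]: "mdet (madj A) = mdet A"
  by (cases A rule: prod_cases4) (simp add: algebra_simps)

lemma mem_cls: "M \<in> cls M"
  unfolding cls_def by (rule CollectI, rule exI[of _ 1]) simp

lemma in_cls: "Z \<in> cls M \<longleftrightarrow> (\<exists>t. t \<noteq> 0 \<and> Z = msc t M)"
  unfolding cls_def by blast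

lemma cls_msc: "t \<noteq> 0 \<Longrightarrow> cls (msc t M) = cls M"
proof -
  assume t: "t \<noteq> 0"
  have "Z \<in> cls (msc t M) \<longleftrightarrow> Z \<in> cls M" for Z
  proof
    assume "Z \<in> cls (msc t M)" then obtain s where "s \<noteq> 0" "Z = msc (s*t) M"
      by (auto simp: in_cls)
    then show "Z \<in> cls M" using t unfolding in_cls by (intro exI[of _ "s*t"]) simp
  next
    assume "Z \<in> cls M" then obtain s where s: "s \<noteq> 0" "Z = msc s M" by (auto simp: in_cls)
    then have "Z = msc (s / t) (msc t M)" using t by simp
    then show "Z \<in> cls (msc t M)" using s t unfolding in_cls by (intro exI[of _ "s/t"]) simp
  qed
  then show ?thesis by blast
qed

lemma rep_cls: "\<exists>t. t \<noteq> 0 \<and> rep (cls M) = msc t M"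
proof -
  have "rep (cls M) \<in> cls M" unfolding rep_def by (rule someI, rule mem_cls)
  then show ?thesis by (simp add: in_cls)
qed

lemma cls_rep_cls: "cls (rep (cls M)) = cls M"
  using rep_cls[of M] cls_msc by metis

lemma PGL2_cls: "g \<in> PGL2 \<Longrightarrow> \<exists>G. mdet G \<noteq> 0 \<and> g = cls G"
  unfolding PGL2_def GL2_def by blast

lemma cls_PGL2: "mdet G \<noteq> 0 \<Longrightarrow> cls G \<in> PGL2"
  by (auto simp: PGL2_def GL2_def)

lemma cls_rep: "g \<in> PGL2 \<Longrightarrow> cls (rep g) = g"
  using PGL2_cls cls_rep_cls by metis

lemma rep_det: "g \<in> PGL2 \<Longrightarrow> mdet (rep g) \<noteq> 0"
proof -
  assume "g \<in> PGL2" then obtain G where G: "mdet G \<noteq> 0" "g = cls G" using PGL2_cls by blast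
  obtain t where "t \<noteq> 0" "rep (cls G) = msc t G" using rep_cls by blast
  then show ?thesis using G by simp
qed

lemma gmul_cls: "gmul (cls A) (cls B) = cls (mmul A B)"
proof -
  obtain s where s: "s \<noteq> 0" "rep (cls A) = msc s A" using rep_cls by blast
  obtain t where t: "t \<noteq> 0" "rep (cls B) = msc t B" using rep_cls by blast
  show ?thesis unfolding gmul_def using s t by (simp add: cls_msc)
qed

lemma ginv_cls: "ginv (cls A) = cls (madj A)"
proof -
  obtain s where s: "s \<noteq> 0" "rep (cls A) = msc s A" using rep_cls by blast
  show ?thesis unfolding ginv_def using s by (simp add: cls_msc)
qed

lemma gconj_cls: "gconj (cls A) (cls B) = cls (mmul (mmul A B) (madj A))"
  unfolding gconj_def by (simp add: gmul_cls ginv_cls)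

lemma gconj_gconj:
  assumes "g \<in> PGL2" "g' \<in> PGL2" "h \<in> PGL2"
  shows "\<exists>g''\<in>PGL2. gconj g (gconj g' h) = gconj g'' h"
proof -
  obtain A where A: "mdet A \<noteq> 0" "g = cls A" using PGL2_cls assms by blast
  obtain B where B: "mdet B \<noteq> 0" "g' = cls B" using PGL2_cls assms by blast
  obtain C where C: "h = cls C" using PGL2_cls assms by blast
  have "gconj g (gconj g' h) = cls (mmul (mmul (mmul A B) C) (madj (mmul A B)))"
    by (simp add: A B C gconj_cls madj_mmul mmul_assoc)
  also have "\<dots> = gconj (cls (mmul A B)) h" by (simp add: C gconj_cls)
  finally show ?thesis using A B cls_PGL2[of "mmul A B"] by auto
qed

lemma gconj_PGL2: "g \<in> PGL2 \<Longrightarrow> h \<in> PGL2 \<Longrightarrow> gconj g h \<in> PGL2"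
proof -
  assume "g \<in> PGL2" "h \<in> PGL2"
  then obtain A C where "mdet A \<noteq> 0" "g = cls A" "mdet C \<noteq> 0" "h = cls C" using PGL2_cls by metis
  then show ?thesis by (simp add: gconj_cls cls_PGL2)
qed

lemma conj_class_closed:
  "h \<in> PGL2 \<Longrightarrow> y \<in> conj_class h \<Longrightarrow> g \<in> PGL2 \<Longrightarrow> gconj g y \<in> conj_class h"
  unfolding conj_class_def using gconj_gconj by blast

lemma conj_class_PGL2: "h \<in> PGL2 \<Longrightarrow> y \<in> conj_class h \<Longrightarrow> y \<in> PGL2"
  unfolding conj_class_def using gconj_PGL2 by blast

lemma char_sim:
  assumes "h \<in> PGL2" "y \<in> conj_class h" "Z \<in> y"
  shows "\<exists>s. s \<noteq> 0 \<and> mtr Z = s * mtr (rep h) \<and> mdet Z = s^2 * mdet (rep h)"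
proof -
  obtain g where g: "g \<in> PGL2" "y = gconj g h" using assms unfolding conj_class_def by blast
  obtain A where A: "mdet A \<noteq> 0" "g = cls A" using PGL2_cls g by blast
  have h: "h = cls (rep h)" using cls_rep assms(1) by metis
  have "y = cls (mmul (mmul A (rep h)) (madj A))" using g A h gconj_cls by metis
  then obtain t where t: "t \<noteq> 0" "Z = msc t (mmul (mmul A (rep h)) (madj A))"
    using assms by (auto simp: in_cls)
  have "mtr Z = (t * mdet A) * mtr (rep h)" using t by (simp add: mtr_conj)
  moreover have "mdet Z = (t * mdet A)^2 * mdet (rep h)" using t
    by (simp add: power2_eq_square algebra_simps)
  ultimately show ?thesis using t A by (intro exI[of _ "t * mdet A"]) simp
qed


context NA begin

lemma GLm: "(a,b,c,e) \<in> Gamma_lift v D \<longleftrightarrow> a \<in> Pideal v 0 \<and> b \<in> Pideal v 0 \<and> c \<in> Pideal v (int D)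
   \<and> e \<in> Pideal v 0 \<and> a*e - b*c \<in> Ounits v"
  by (simp add: Gamma_lift_def)

lemma one_unit[simp]: "1 \<in> Ounits v" by (simp add: Ounits_def v1)

lemma GL_U: "q \<in> Pideal v 0 \<Longrightarrow> (1,q,0,1) \<in> Gamma_lift v D"
  by (simp add: GLm P1)
lemma GL_L: "r \<in> Pideal v (int D) \<Longrightarrow> (1,0,r,1) \<in> Gamma_lift v D"
  by (simp add: GLm P1)

lemma GL_mmul: assumes "A \<in> Gamma_lift v D" "B \<in> Gamma_lift v D" shows "mmul A B \<in> Gamma_lift v D"
proof -
  obtain a b c e where A: "A = (a,b,c,e)" by (cases A rule: prod_cases4)
  obtain a' b' c' e' where B: "B = (a',b',c',e')" by (cases B rule: prod_cases4)
  have h: "a \<in> Pideal v 0" "b \<in> Pideal v 0" "c \<in> Pideal v (int D)" "e \<in> Pideal v 0" "a*e - b*c \<in> Ounits v"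
     "a' \<in> Pideal v 0" "b' \<in> Pideal v 0" "c' \<in> Pideal v (int D)" "e' \<in> Pideal v 0" "a'*e' - b'*c' \<in> Ounits v"
    using assms by (auto simp: A B GLm)
  have cD: "c \<in> Pideal v 0" "c' \<in> Pideal v 0" using h P_mono[of 0 "int D"] by auto
  have 1: "a * a' + b * c' \<in> Pideal v 0" using h cD by (intro P_add P_Ointo)
  have 2: "a * b' + b * e' \<in> Pideal v 0" using h by (intro P_add P_Ointo)
  have 3: "c * a' + e * c' \<in> Pideal v (int D)" using h by (intro P_add P_Ointo P_intoO)
  have 4: "c * b' + e * e' \<in> Pideal v 0" using h cD by (intro P_add P_Ointo)
  have "(a * a' + b * c') * (c * b' + e * e') - (a * b' + b * e') * (c * a' + e * c')
      = (a*e - b*c) * (a'*e' - b'*c')" by (simp add: algebra_simps)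
  then have "(a * a' + b * c') * (c * b' + e * e') - (a * b' + b * e') * (c * a' + e * c') \<in> Ounits v"
    using Ounits_mult[OF h(5) h(10)] by simp
  then show ?thesis using 1 2 3 4 by (simp add: A B GLm del: mdet_mmul)
qed

lemma GL_det_ne: "G \<in> Gamma_lift v D \<Longrightarrow> mdet G \<noteq> 0"
  by (cases G rule: prod_cases4) (auto simp: GLm Ounits_def)

lemma GL_fst_unit: assumes "G \<in> Gamma_lift v D" "1 \<le> D" shows "fst G \<in> Ounits v"
proof -
  obtain a b c e where G: "G = (a,b,c,e)" by (cases G rule: prod_cases4)
  have h: "a \<in> Pideal v 0" "b \<in> Pideal v 0" "c \<in> Pideal v (int D)" "e \<in> Pideal v 0" "a*e - b*c \<in> Ounits v"
    using assms by (auto simp: G GLm)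
  have "c \<in> Pideal v 1" using P_mono[OF _ h(3)] assms(2) by simp
  then have "b * c \<in> Pideal v 1" using P_Ointo h by blast
  then have "(a*e - b*c) + b*c \<in> Ounits v" using unit_plus_P h by blast
  then have ae: "a * e \<in> Ounits v" by simp
  then have "a \<noteq> 0" "e \<noteq> 0" by (auto simp: Ounits_def)
  then have "v a + v e = 0" "0 \<le> v a" "0 \<le> v e" using ae h vmul by (auto simp: Ounits_def Pideal_def)
  then show ?thesis using \<open>a \<noteq> 0\<close> by (simp add: G Ounits_def)
qed

lemma GL_snd_unit: assumes "(a,b,c,e) \<in> Gamma_lift v D" "1 \<le> D" shows "e \<in> Ounits v"
proof -
  have h: "a \<in> Pideal v 0" "b \<in> Pideal v 0" "c \<in> Pideal v (int D)" "e \<in> Pideal v 0" "a*e - b*c \<in> Ounits v"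
    using assms by (auto simp: GLm)
  have "c \<in> Pideal v 1" using P_mono[OF _ h(3)] assms(2) by simp
  then have "b * c \<in> Pideal v 1" using P_Ointo h by blast
  then have "(a*e - b*c) + b*c \<in> Ounits v" using unit_plus_P h by blast
  then have ae: "a * e \<in> Ounits v" by simp
  then have "a \<noteq> 0" "e \<noteq> 0" by (auto simp: Ounits_def)
  then have "v a + v e = 0" "0 \<le> v a" "0 \<le> v e" using ae h vmul by (auto simp: Ounits_def Pideal_def)
  then show ?thesis using \<open>e \<noteq> 0\<close> by (simp add: Ounits_def)
qed

lemma xtilde_cls:
  assumes "G \<in> Gamma_lift v D"
  shows "xtilde v x D (cls G) = x ((fst G)^2 / mdet G)"
proof -
  define m where "m = (SOME m. m \<in> cls G \<and> m \<in> Gamma_lift v D)"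
  have "m \<in> cls G \<and> m \<in> Gamma_lift v D" unfolding m_def
    by (rule someI[of _ G]) (simp add: mem_cls assms)
  then obtain t where t: "t \<noteq> 0" "m = msc t G" by (auto simp: in_cls)
  have "fst m = t * fst G" using t by (cases G rule: prod_cases4) simp
  then have "(fst m)^2 / mdet m = (fst G)^2 / mdet G" using t
    by (simp add: power_mult_distrib)
  then show ?thesis unfolding xtilde_def Let_def m_def[symmetric] by simp
qed

lemma cls_Gamma: "G \<in> Gamma_lift v D \<Longrightarrow> cls G \<in> Gamma v D"
  by (simp add: Gamma_def)

end

locale HX = NA v for v :: "'f::field \<Rightarrow> int" +
  fixes x :: "'f \<Rightarrow> complex" and \<phi> :: "'f mat2 set \<Rightarrow> complex" and D :: nat and z :: 'f
  assumes D1: "1 \<le> D"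
    and xmul: "\<forall>a\<in>Ounits v. \<forall>b\<in>Ounits v. x (a*b) = x a * x b"
    and xnz: "\<forall>a\<in>Ounits v. x a \<noteq> 0"
    and zP: "z \<in> Pideal v (int D - 1)"
    and zu: "1 + z \<in> Ounits v"
    and zx: "(x (1+z))^2 \<noteq> 1"
    and hp: "\<forall>\<gamma>\<in>Gamma v D. \<forall>g\<in>PGL2. \<phi> (gmul \<gamma> g) = xtilde v x D \<gamma> * \<phi> g \<and> \<phi> (gmul g \<gamma>) = xtilde v x D \<gamma> * \<phi> g"
begin

definition xval :: "'f mat2 \<Rightarrow> complex" where "xval G = x ((fst G)^2 / mdet G)"

lemma xval_nz: "G \<in> Gamma_lift v D \<Longrightarrow> xval G \<noteq> 0"
proof -
  assume G: "G \<in> Gamma_lift v D"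
  have "fst G \<in> Ounits v" using GL_fst_unit G D1 by blast
  moreover have "mdet G \<in> Ounits v" using G by (cases G rule: prod_cases4) (simp add: GLm)
  ultimately have "(fst G)^2 / mdet G \<in> Ounits v"
    by (simp add: power2_eq_square Ounits_div Ounits_mult)
  then show ?thesis using xnz by (simp add: xval_def)
qed

lemma phi_l: "G \<in> Gamma_lift v D \<Longrightarrow> mdet Y \<noteq> 0 \<Longrightarrow> \<phi> (cls (mmul G Y)) = xval G * \<phi> (cls Y)"
  using hp cls_Gamma[of G] cls_PGL2[of Y] by (simp add: gmul_cls[symmetric] xtilde_cls xval_def)

lemma phi_r: "G \<in> Gamma_lift v D \<Longrightarrow> mdet Y \<noteq> 0 \<Longrightarrow> \<phi> (cls (mmul Y G)) = xval G * \<phi> (cls Y)"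
  using hp cls_Gamma[of G] cls_PGL2[of Y] by (simp add: gmul_cls[symmetric] xtilde_cls xval_def)

lemma test:
  assumes "mdet Y \<noteq> 0" "G \<in> Gamma_lift v D" "G' \<in> Gamma_lift v D"
    "mmul Y G = mmul G' Y" "xval G \<noteq> xval G'"
  shows "\<phi> (cls Y) = 0"
  using phi_l[OF assms(3,1)] phi_r[OF assms(2,1)] assms(4,5) by auto

lemma move_l: "G \<in> Gamma_lift v D \<Longrightarrow> mdet Y \<noteq> 0 \<Longrightarrow> \<phi> (cls (mmul G Y)) = 0 \<Longrightarrow> \<phi> (cls Y) = 0"
  using phi_l xval_nz by simp

lemma move_r: "G \<in> Gamma_lift v D \<Longrightarrow> mdet Y \<noteq> 0 \<Longrightarrow> \<phi> (cls (mmul Y G)) = 0 \<Longrightarrow> \<phi> (cls Y) = 0"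
  using phi_r xval_nz by simp

definition DCm :: "'f mat2 \<Rightarrow> bool" where
  "DCm Y \<longleftrightarrow> (\<exists>G1 G2 a e. G1 \<in> Gamma_lift v D \<and> G2 \<in> Gamma_lift v D \<and> a \<noteq> 0 \<and> e \<noteq> 0 \<and>
      Y = mmul (mmul G1 (a,0,0,e)) G2)"

definition PP :: "'f mat2 \<Rightarrow> bool" where "PP Y \<longleftrightarrow> \<phi> (cls Y) = 0 \<or> DCm Y"

lemma PP_l: assumes "G \<in> Gamma_lift v D" "H \<in> Gamma_lift v D" "mmul H G = (1,0,0,1)"
  "mdet Y \<noteq> 0" "PP (mmul G Y)" shows "PP Y"
proof -
  { assume "DCm (mmul G Y)"
    then obtain G1 G2 a e where d: "G1 \<in> Gamma_lift v D" "G2 \<in> Gamma_lift v D" "a \<noteq> 0" "e \<noteq> 0"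
      "mmul G Y = mmul (mmul G1 (a,0,0,e)) G2" unfolding DCm_def by blast
    have "Y = mmul (mmul H G) Y" using assms by simp
    also have "\<dots> = mmul (mmul (mmul H G1) (a,0,0,e)) G2" by (simp add: mmul_assoc d(5))
    finally have "DCm Y" unfolding DCm_def using d GL_mmul assms(2) by blast }
  then show ?thesis using assms move_l unfolding PP_def by blast
qed

lemma PP_r: assumes "G \<in> Gamma_lift v D" "H \<in> Gamma_lift v D" "mmul G H = (1,0,0,1)"
  "mdet Y \<noteq> 0" "PP (mmul Y G)" shows "PP Y"
proof -
  { assume "DCm (mmul Y G)"
    then obtain G1 G2 a e where d: "G1 \<in> Gamma_lift v D" "G2 \<in> Gamma_lift v D" "a \<noteq> 0" "e \<noteq> 0"
      "mmul Y G = mmul (mmul G1 (a,0,0,e)) G2" unfolding DCm_def by blast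
    have "Y = mmul Y (mmul G H)" using assms by simp
    also have "\<dots> = mmul (mmul G1 (a,0,0,e)) (mmul G2 H)" by (simp add: mmul_assoc[symmetric] d(5))
    finally have "DCm Y" unfolding DCm_def using d GL_mmul assms(2) by blast }
  then show ?thesis using assms move_r unfolding PP_def by blast
qed

end


context HX begin

lemma zO: "z \<in> Pideal v 0" using P_mono[OF _ zP] D1 by simp

lemma zmulP1: "w \<in> Pideal v 1 \<Longrightarrow> z * w \<in> Pideal v (int D)"
  using P_mult[OF zP] by fastforce

lemma zmulPD: "w \<in> Pideal v (1 - int D) \<Longrightarrow> z * w \<in> Pideal v 0"
  using P_mult[OF zP] by fastforce

lemma x1: "x 1 = 1"
proof -
  have "x 1 = x 1 * x 1" using xmul one_unit by (metis mult_1)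
  moreover have "x 1 \<noteq> 0" using xnz one_unit by blast
  ultimately show ?thesis by (metis mult_cancel_left1)
qed

lemma u_nz: "1 + z \<noteq> 0" using zu by (simp add: Ounits_def)

lemma xu_inv: "x (1 + z) \<noteq> x (1 / (1 + z))"
proof
  assume eq: "x (1 + z) = x (1 / (1 + z))"
  have "1 / (1+z) \<in> Ounits v" using Ounits_inv[OF zu] by (simp add: divide_inverse)
  then have "x (1+z) * x (1/(1+z)) = x ((1+z) * (1/(1+z)))" using xmul zu by metis
  also have "\<dots> = 1" using u_nz x1 by simp
  finally show False using eq zx by (simp add: power2_eq_square)
qed

lemma one_minus_z_O: "1 - z \<in> Pideal v 0" using P_diff[OF P1 zO] .
lemma one_plus_z_O: "1 + z \<in> Pideal v 0" using P_add[OF P1 zO] .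

lemma T_K2:
  assumes "b \<noteq> 0" "c \<noteq> 0" "z * (e / b) \<in> Pideal v (int D)"
  shows "\<phi> (cls (0,b,c,e)) = 0"
proof (rule test)
  show "mdet (0,b,c,e) \<noteq> 0" using assms by simp
  show "(1+z,0,0,1) \<in> Gamma_lift v D" using zu by (simp add: GLm P1 one_plus_z_O)
  show "(1,0,-(z*(e/b)),1+z) \<in> Gamma_lift v D" using zu assms by (simp add: GLm P1 one_plus_z_O)
  show "mmul (0,b,c,e) (1+z,0,0,1) = mmul (1,0,-(z*(e/b)),1+z) (0,b,c,e)"
    using assms by (simp add: field_simps)
  show "xval (1+z,0,0,1) \<noteq> xval (1,0,-(z*(e/b)),1+z)"
    using xu_inv u_nz by (simp add: xval_def power2_eq_square)
qed

lemma T_K3: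
  assumes "a \<noteq> 0" "c \<noteq> 0" "a*e - b*c \<noteq> 0"
    "- (z * ((a*e - b*c) / (a*c))) \<in> Pideal v 0" "z * (a / c) \<in> Pideal v 0" "z * (c / a) \<in> Pideal v (int D)"
  shows "\<phi> (cls (a,b,c,e)) = 0"
proof (rule test)
  define q where "q = - (z * ((a*e - b*c) / (a*c)))"
  show "mdet (a,b,c,e) \<noteq> 0" using assms by simp
  show "(1,q,0,1) \<in> Gamma_lift v D" using assms by (simp add: GLm P1 q_def)
  have d: "(1 + z) * (1 - z) - - (z * (a / c)) * (z * (c / a)) = 1"
    using assms by (simp add: field_simps)
  show "(1+z, - (z*(a/c)), z*(c/a), 1-z) \<in> Gamma_lift v D"
    using assms unfolding GLm d by (simp add: one_plus_z_O one_minus_z_O)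
  show "mmul (a,b,c,e) (1,q,0,1) = mmul (1+z, - (z*(a/c)), z*(c/a), 1-z) (a,b,c,e)"
    using assms by (simp add: q_def field_simps)
  have "xval (1,q,0,1) = 1" by (simp add: xval_def x1)
  moreover have "xval (1+z, - (z*(a/c)), z*(c/a), 1-z) = x ((1+z)*(1+z))"
    unfolding xval_def using d by (simp add: power2_eq_square)
  moreover have "x ((1+z)*(1+z)) = (x (1+z))^2" using xmul zu by (simp add: power2_eq_square)
  ultimately show "xval (1,q,0,1) \<noteq> xval (1+z, - (z*(a/c)), z*(c/a), 1-z)" using zx by metis
qed

lemma T_B:
  assumes "a \<noteq> 0" "b \<noteq> 0" "e \<noteq> 0"
    "z * (b / a) \<in> Pideal v 0" "z * (a / b) \<in> Pideal v (int D)" "z * (e / b) \<in> Pideal v (int D)"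
  shows "\<phi> (cls (a,b,0,e)) = 0"
proof (rule test)
  show "mdet (a,b,0,e) \<noteq> 0" using assms by simp
  have d: "(1 + z) * (1 - z) - z * (b / a) * - (z * (a / b)) = 1"
    using assms by (simp add: field_simps)
  show "(1+z, z*(b/a), - (z*(a/b)), 1-z) \<in> Gamma_lift v D"
    using assms unfolding GLm d by (simp add: one_plus_z_O one_minus_z_O)
  show "(1,0,- (z*(e/b)),1) \<in> Gamma_lift v D" using assms by (simp add: GLm P1)
  show "mmul (a,b,0,e) (1+z, z*(b/a), - (z*(a/b)), 1-z) = mmul (1,0,- (z*(e/b)),1) (a,b,0,e)"
    using assms by (simp add: field_simps)
  have "xval (1,0,- (z*(e/b)),1) = 1" by (simp add: xval_def x1)
  moreover have "xval (1+z, z*(b/a), - (z*(a/b)), 1-z) = x ((1+z)*(1+z))"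
    unfolding xval_def using d by (simp add: power2_eq_square)
  moreover have "x ((1+z)*(1+z)) = (x (1+z))^2" using xmul zu by (simp add: power2_eq_square)
  ultimately show "xval (1+z, z*(b/a), - (z*(a/b)), 1-z) \<noteq> xval (1,0,- (z*(e/b)),1)" using zx by metis
qed

lemma T_LTA:
  assumes "a \<noteq> 0" "c \<noteq> 0" "e \<noteq> 0" "z \<in> Pideal v 1"
    "z * (e / c) \<in> Pideal v 0" "z * (c / e) \<in> Pideal v (int D)" "z * (a / c) \<in> Pideal v 0"
  shows "\<phi> (cls (a,0,c,e)) = 0"
proof (rule test)
  have mu: "1 - z \<in> Ounits v" using one_minus_P assms by blast
  have mz: "1 - z \<noteq> 0" using mu by (simp add: Ounits_def)
  show "mdet (a,0,c,e) \<noteq> 0" using assms by simp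
  have d1: "1 * 1 - - (z * (e / c)) * - (z * (c / e)) = (1+z)*(1-z)"
    using assms by (simp add: field_simps)
  show "(1, - (z*(e/c)), - (z*(c/e)), 1) \<in> Gamma_lift v D"
    using assms Ounits_mult[OF zu mu] unfolding GLm d1 by (simp add: P1)
  show "(1+z, - (z*(a/c)), 0, 1-z) \<in> Gamma_lift v D"
    using assms Ounits_mult[OF zu mu] unfolding GLm by (simp add: one_plus_z_O one_minus_z_O)
  show "mmul (a,0,c,e) (1, - (z*(e/c)), - (z*(c/e)), 1) = mmul (1+z, - (z*(a/c)), 0, 1-z) (a,0,c,e)"
    using assms by (simp add: field_simps)
  have i1: "1 / (1+z) \<in> Ounits v" using Ounits_inv[OF zu] by (simp add: divide_inverse)
  have i2: "1 / (1-z) \<in> Ounits v" using Ounits_inv[OF mu] by (simp add: divide_inverse)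
  have "xval (1, - (z*(e/c)), - (z*(c/e)), 1) = x ((1/(1+z)) * (1/(1-z)))"
    unfolding xval_def using d1 by simp
  also have "\<dots> = x (1/(1+z)) * x (1/(1-z))" using xmul i1 i2 by blast
  finally have A: "xval (1, - (z*(e/c)), - (z*(c/e)), 1) = x (1/(1+z)) * x (1/(1-z))" .
  have "xval (1+z, - (z*(a/c)), 0, 1-z) = x ((1+z) * (1/(1-z)))"
    unfolding xval_def using u_nz by (simp add: power2_eq_square)
  also have "\<dots> = x (1+z) * x (1/(1-z))" using xmul zu i2 by blast
  finally have B: "xval (1+z, - (z*(a/c)), 0, 1-z) = x (1+z) * x (1/(1-z))" .
  have "x (1/(1-z)) \<noteq> 0" using xnz i2 by blast
  then show "xval (1, - (z*(e/c)), - (z*(c/e)), 1) \<noteq> xval (1+z, - (z*(a/c)), 0, 1-z)"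
    unfolding A B using xu_inv by simp
qed

end


context HX begin

lemma P1_O: "w \<in> Pideal v 1 \<Longrightarrow> w \<in> Pideal v 0" using P_mono[of 0 1] by simp
lemma PD_P1: "w \<in> Pideal v (int D) \<Longrightarrow> w \<in> Pideal v 1" using P_mono[of 1 "int D"] D1 by simp

lemma ndiv1: "p \<noteq> 0 \<Longrightarrow> q \<noteq> 0 \<Longrightarrow> p / q \<notin> Pideal v 0 \<Longrightarrow> q / p \<in> Pideal v 1"
  using notP_div[of p q 0] by simp
lemma ndivO: "p \<noteq> 0 \<Longrightarrow> q \<noteq> 0 \<Longrightarrow> p / q \<notin> Pideal v 1 \<Longrightarrow> q / p \<in> Pideal v 0"
  using notP_div[of p q 1] by simp
lemma ndivD: "p \<noteq> 0 \<Longrightarrow> q \<noteq> 0 \<Longrightarrow> p / q \<notin> Pideal v (int D) \<Longrightarrow> z * (q / p) \<in> Pideal v 0"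
proof -
  assume "p \<noteq> 0" "q \<noteq> 0" "p / q \<notin> Pideal v (int D)"
  then have "q / p \<in> Pideal v (1 - int D)" using notP_div[of p q "int D"] by simp
  then show ?thesis using zmulPD by blast
qed

lemma DC_diag: "a \<noteq> 0 \<Longrightarrow> e \<noteq> 0 \<Longrightarrow> G1 \<in> Gamma_lift v D \<Longrightarrow> G2 \<in> Gamma_lift v D \<Longrightarrow>
   Y = mmul (mmul G1 (a,0,0,e)) G2 \<Longrightarrow> PP Y"
  unfolding PP_def DCm_def by blast

lemma I_GL: "(1,0,0,1) \<in> Gamma_lift v D" using GL_U[of 0] by simp

lemma LT: assumes a: "a \<noteq> 0" and e: "e \<noteq> 0" shows "PP (a,0,c,e)"
proof -
  consider "c / a \<in> Pideal v (int D)" | "c / e \<in> Pideal v (int D)"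
    | "c / a \<notin> Pideal v (int D)" "c / e \<notin> Pideal v (int D)" by blast
  then show ?thesis
  proof cases
    case 1
    show ?thesis by (rule DC_diag[OF a e GL_L[OF 1] I_GL]) (use a in \<open>simp\<close>)
  next
    case 2
    show ?thesis by (rule DC_diag[OF a e I_GL GL_L[OF 2]]) (use e in \<open>simp\<close>)
  next
    case 3
    then have c: "c \<noteq> 0" by auto
    have ac: "z * (a / c) \<in> Pideal v 0" using ndivD[OF c a] 3 by blast
    have ec: "z * (e / c) \<in> Pideal v 0" using ndivD[OF c e] 3 by blast
    consider "c / a \<in> Pideal v 1" | "c / e \<in> Pideal v 1" | "c / a \<notin> Pideal v 1" "c / e \<notin> Pideal v 1"
      by blast
    then show ?thesis
    proof cases
      case 1
      have "(a*e - 0*c) / (a*c) = e / c" using a by simp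
      then have "\<phi> (cls (a,0,c,e)) = 0"
        using T_K3[of a c e 0] a c e ac ec zmulP1[OF 1] by simp
      then show ?thesis by (simp add: PP_def)
    next
      case 2
      have "int D \<noteq> 1" using 2 3 by auto
      then have "z \<in> Pideal v 1" using P_mono[OF _ zP] D1 by simp
      then have "\<phi> (cls (a,0,c,e)) = 0"
        using T_LTA[of a c e] a c e ac ec zmulP1[OF 2] by simp
      then show ?thesis by (simp add: PP_def)
    next
      case 4: 3
      have ac': "a / c \<in> Pideal v 0" using ndivO[OF c a] 4 by blast
      have ec': "e / c \<in> Pideal v 0" using ndivO[OF c e] 4 by blast
      define b' where "b' = -(a/c)*e"
      have b': "b' \<noteq> 0" using a c e by (simp add: b'_def)
      define Y1 where "Y1 = (0::'f, b', c, e)"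
      have e1: "mmul (1, -(a/c), 0, 1) (a,0,c,e) = Y1" using c by (simp add: Y1_def b'_def)
      have e2: "mmul Y1 (1, -(e/c), 0, 1) = (0, b', c, 0)" using c by (simp add: Y1_def)
      have "\<phi> (cls (0, b', c, 0)) = 0" using T_K2[of b' c 0] b' c by simp
      then have "\<phi> (cls (mmul Y1 (1, -(e/c), 0, 1))) = 0" by (simp only: e2)
      moreover have "mdet Y1 \<noteq> 0" using b' c by (simp add: Y1_def)
      ultimately have "\<phi> (cls Y1) = 0"
        using move_r[OF GL_U[OF P_neg[OF ec']]] by blast
      then have "\<phi> (cls (mmul (1, -(a/c), 0, 1) (a,0,c,e))) = 0" by (simp only: e1)
      moreover have "mdet (a,0,c,e) \<noteq> 0" using a e by simp
      ultimately have "\<phi> (cls (a,0,c,e)) = 0"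
        using move_l[OF GL_U[OF P_neg[OF ac']]] by blast
      then show ?thesis by (simp add: PP_def)
    qed
  qed
qed

lemma UT: assumes a: "a \<noteq> 0" and e: "e \<noteq> 0" shows "PP (a,b,0,e)"
proof -
  consider "b / a \<in> Pideal v 0" | "b / e \<in> Pideal v 0"
    | "b / a \<notin> Pideal v 0" "b / e \<notin> Pideal v 0" by blast
  then show ?thesis
  proof cases
    case 1
    show ?thesis by (rule DC_diag[OF a e I_GL GL_U[OF 1]]) (use a in \<open>simp\<close>)
  next
    case 2
    show ?thesis by (rule DC_diag[OF a e GL_U[OF 2] I_GL]) (use e in \<open>simp\<close>)
  next
    case 3
    then have b: "b \<noteq> 0" by auto
    have ab: "a / b \<in> Pideal v 1" using ndiv1[OF b a] 3 by blast
    have eb: "e / b \<in> Pideal v 1" using ndiv1[OF b e] 3 by blast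
    show ?thesis
    proof (cases "a / b \<in> Pideal v (int D)")
      case False
      have "z * (b / a) \<in> Pideal v 0" using ndivD[OF a b] False by blast
      then have "\<phi> (cls (a,b,0,e)) = 0" using T_B[of a b e] a b e zmulP1[OF ab] zmulP1[OF eb] by blast
      then show ?thesis by (simp add: PP_def)
    next
      case True
      have e1: "mmul (a,b,0,e) (1,0,-(a/b),1) = (0, b, -(e*(a/b)), e)" using b by simp
      have "\<phi> (cls (0, b, -(e*(a/b)), e)) = 0" using T_K2 a b e zmulP1[OF eb] by simp
      then have "\<phi> (cls (mmul (a,b,0,e) (1,0,-(a/b),1))) = 0" by (simp only: e1)
      moreover have "mdet (a,b,0,e) \<noteq> 0" using a e by simp
      ultimately have "\<phi> (cls (a,b,0,e)) = 0"
        using move_r[OF GL_L[OF P_neg[OF True]]] by blast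
      then show ?thesis by (simp add: PP_def)
    qed
  qed
qed

end


context HX begin

lemma phi_PP: "\<phi> (cls Y) = 0 \<Longrightarrow> PP Y" by (simp add: PP_def)

lemma GEN: assumes det: "a*e - b*c \<noteq> 0" shows "PP (a,b,c,e)"
proof -
  have dY: "mdet (a,b,c,e) \<noteq> 0" using det by simp
  show ?thesis
  proof (cases "b = 0")
    case True
    then have "a \<noteq> 0" "e \<noteq> 0" using det by auto
    then show ?thesis using LT True by simp
  next
    case b: False
    show ?thesis
    proof (cases "c = 0")
      case True
      then have "a \<noteq> 0" "e \<noteq> 0" using det by auto
      then show ?thesis using UT True by simp
    next
      case c: False
      consider (s1) "a \<noteq> 0 \<and> b / a \<in> Pideal v 0" | (s2) "e \<noteq> 0 \<and> b / e \<in> Pideal v 0"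
        | (s3) "\<not> (a \<noteq> 0 \<and> b / a \<in> Pideal v 0)" "\<not> (e \<noteq> 0 \<and> b / e \<in> Pideal v 0)" by blast
      then show ?thesis
      proof cases
        case s1
        then have a: "a \<noteq> 0" and ba: "b / a \<in> Pideal v 0" by auto
        have e1: "mmul (a,b,c,e) (1,-(b/a),0,1) = (a,0,c,e - c*(b/a))" using a by simp
        have "e - c*(b/a) \<noteq> 0"
        proof
          assume "e - c*(b/a) = 0" then have "a*e - b*c = 0" using a by (simp add: field_simps)
          then show False using det by simp
        qed
        then have "PP (mmul (a,b,c,e) (1,-(b/a),0,1))" unfolding e1 using LT a by blast
        then show ?thesis using PP_r[OF GL_U[OF P_neg[OF ba]] GL_U[OF ba] _ dY] a by simp
      next
        case s2
        then have e: "e \<noteq> 0" and be: "b / e \<in> Pideal v 0" by auto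
        have e1: "mmul (1,-(b/e),0,1) (a,b,c,e) = (a - (b/e)*c,0,c,e)" using e by simp
        have "a - (b/e)*c \<noteq> 0"
        proof
          assume "a - (b/e)*c = 0" then have "a*e - b*c = 0" using e by (simp add: field_simps)
          then show False using det by simp
        qed
        then have "PP (mmul (1,-(b/e),0,1) (a,b,c,e))" unfolding e1 using LT e by blast
        then show ?thesis using PP_l[OF GL_U[OF P_neg[OF be]] GL_U[OF be] _ dY] e by simp
      next
        case s3
        have ab: "a / b \<in> Pideal v 1"
        proof (cases "a = 0")
          case False then show ?thesis using ndiv1[OF b False] s3 by blast
        qed simp
        have eb: "e / b \<in> Pideal v 1"
        proof (cases "e = 0")
          case False then show ?thesis using ndiv1[OF b False] s3 by blast
        qed simp
        show ?thesis
        proof (cases "c / b \<in> Pideal v 1")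
          case False
          have bc: "b / c \<in> Pideal v 0" using ndivO[OF c b] False by blast
          have "(a / b) * (b / c) \<in> Pideal v 1" using P_intoO[OF ab bc] .
          then have ac: "a / c \<in> Pideal v 0" using b by (simp add: P1_O)
          have "(e / b) * (b / c) \<in> Pideal v 1" using P_intoO[OF eb bc] .
          then have ec: "e / c \<in> Pideal v 0" using b by (simp add: P1_O)
          define b' where "b' = b - (a/c)*e"
          define Y1 where "Y1 = (0::'f, b', c, e)"
          have e1: "mmul (1,-(a/c),0,1) (a,b,c,e) = Y1" using c by (simp add: Y1_def b'_def)
          have e2: "mmul Y1 (1, -(e/c), 0, 1) = (0, b', c, 0)" using c by (simp add: Y1_def)
          have b': "b' \<noteq> 0"
          proof
            assume "b' = 0" then have "a*e - b*c = 0" using c by (simp add: b'_def field_simps)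
            then show False using det by simp
          qed
          have "\<phi> (cls (0, b', c, 0)) = 0" using T_K2[of b' c 0] b' c by simp
          then have "\<phi> (cls (mmul Y1 (1, -(e/c), 0, 1))) = 0" by (simp only: e2)
          moreover have "mdet Y1 \<noteq> 0" using b' c by (simp add: Y1_def)
          ultimately have "\<phi> (cls Y1) = 0" using move_r[OF GL_U[OF P_neg[OF ec]]] by blast
          then have "\<phi> (cls (mmul (1, -(a/c), 0, 1) (a,b,c,e))) = 0" by (simp only: e1)
          then have "\<phi> (cls (a,b,c,e)) = 0" using move_l[OF GL_U[OF P_neg[OF ac]]] dY by blast
          then show ?thesis by (rule phi_PP)
        next
          case cb: True
          consider (i) "a \<noteq> 0 \<and> c / a \<in> Pideal v (int D)" | (ii) "e \<noteq> 0 \<and> c / e \<in> Pideal v (int D)"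
            | (iii) "a = 0"
            | (iv) "a \<noteq> 0" "c / a \<in> Pideal v 1" "c / a \<notin> Pideal v (int D)" "\<not> (e \<noteq> 0 \<and> c / e \<in> Pideal v (int D))"
            | (v) "a \<noteq> 0" "c / a \<notin> Pideal v 1" by blast
          then show ?thesis
          proof cases
            case i
            then have a: "a \<noteq> 0" and ca: "c / a \<in> Pideal v (int D)" by auto
            have e1: "mmul (1,0,-(c/a),1) (a,b,c,e) = (a,b,0,e - (c/a)*b)" using a by simp
            have "e - (c/a)*b \<noteq> 0"
            proof
              assume "e - (c/a)*b = 0" then have "a*e - b*c = 0" using a by (simp add: field_simps)
              then show False using det by simp
            qed
            then have "PP (mmul (1,0,-(c/a),1) (a,b,c,e))" unfolding e1 using UT a by blast
            then show ?thesis using PP_l[OF GL_L[OF P_neg[OF ca]] GL_L[OF ca] _ dY] a by simp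
          next
            case ii
            then have e: "e \<noteq> 0" and ce: "c / e \<in> Pideal v (int D)" by auto
            have e1: "mmul (a,b,c,e) (1,0,-(c/e),1) = (a - b*(c/e),b,0,e)" using e by simp
            have "a - b*(c/e) \<noteq> 0"
            proof
              assume "a - b*(c/e) = 0" then have "a*e - b*c = 0" using e by (simp add: field_simps)
              then show False using det by simp
            qed
            then have "PP (mmul (a,b,c,e) (1,0,-(c/e),1))" unfolding e1 using UT e by blast
            then show ?thesis using PP_r[OF GL_L[OF P_neg[OF ce]] GL_L[OF ce] _ dY] e by simp
          next
            case iii
            then show ?thesis using T_K2[of b c e] b c zmulP1[OF eb] phi_PP by simp
          next
            case iv
            note a = iv(1)
            show ?thesis
            proof (cases "a / b \<in> Pideal v (int D)")
              case True
              define c' where "c' = c - e*(a/b)"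
              have e1: "mmul (a,b,c,e) (1,0,-(a/b),1) = (0,b,c',e)" using b by (simp add: c'_def)
              have c': "c' \<noteq> 0"
              proof
                assume "c' = 0" then have "a*e - b*c = 0" using b by (simp add: c'_def field_simps)
                then show False using det by simp
              qed
              have "\<phi> (cls (0,b,c',e)) = 0" using T_K2[of b c' e] b c' zmulP1[OF eb] by simp
              then have "\<phi> (cls (mmul (a,b,c,e) (1,0,-(a/b),1))) = 0" by (simp only: e1)
              then have "\<phi> (cls (a,b,c,e)) = 0" using move_r[OF GL_L[OF P_neg[OF True]]] dY by blast
              then show ?thesis by (rule phi_PP)
            next
              case False
              have zba: "z * (b / a) \<in> Pideal v 0" using ndivD[OF a b] False by blast
              have zec: "z * (e / c) \<in> Pideal v 0"
              proof (cases "e = 0")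
                case False then show ?thesis using ndivD[OF c False] iv(4) by blast
              qed simp
              have "(a*e - b*c) / (a*c) = e / c - b / a" using a c by (simp add: field_simps)
              then have "z * ((a*e - b*c) / (a*c)) = z * (e/c) - z * (b/a)" by (simp only: right_diff_distrib)
              then have q: "- (z * ((a*e - b*c) / (a*c))) \<in> Pideal v 0"
                using P_neg[OF P_diff[OF zec zba]] by (simp only:)
              have zac: "z * (a / c) \<in> Pideal v 0" using ndivD[OF c a] iv(3) by blast
              have "\<phi> (cls (a,b,c,e)) = 0"
                using T_K3[OF a c det q zac zmulP1[OF iv(2)]] .
              then show ?thesis by (rule phi_PP)
            qed
          next
            case v
            note a = v(1)
            have ac: "a / c \<in> Pideal v 0" using ndivO[OF c a] v(2) by blast
            define w where "w = (a/c) * (e/b)"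
            have w: "w \<in> Pideal v 1" using P_Ointo[OF ac eb] by (simp add: w_def)
            have wu: "1 - w \<in> Ounits v" using one_minus_P[OF w] .
            define b' where "b' = b - (a/c)*e"
            have bw: "b' = b * (1 - w)" using b by (simp add: b'_def w_def field_simps)
            have b': "b' \<noteq> 0" using bw b wu by (simp add: Ounits_def)
            have "e / b' = (e / b) * inverse (1 - w)" using bw by (simp add: divide_inverse)
            moreover have "(e / b) * inverse (1 - w) \<in> Pideal v 1"
              using P_intoO[OF eb] Ounits_inv[OF wu] Ounits_O by blast
            ultimately have eb': "e / b' \<in> Pideal v 1" by simp
            have e1: "mmul (1,-(a/c),0,1) (a,b,c,e) = (0,b',c,e)" using c by (simp add: b'_def)
            have "\<phi> (cls (0,b',c,e)) = 0" using T_K2[of b' c e] b' c zmulP1[OF eb'] by simp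
            then have "\<phi> (cls (mmul (1,-(a/c),0,1) (a,b,c,e))) = 0" by (simp only: e1)
            then have "\<phi> (cls (a,b,c,e)) = 0" using move_l[OF GL_U[OF P_neg[OF ac]]] dY by blast
            then show ?thesis by (rule phi_PP)
          qed
        qed
      qed
    qed
  qed
qed

end


lemma irr_no_root:
  fixes d t r :: "'f::field"
  assumes "irreducible [:d, -t, 1:]" shows "r^2 - t*r + d \<noteq> 0"
proof
  assume r: "r^2 - t*r + d = 0"
  have "poly [:d, -t, 1:] r = 0" using r by (simp add: algebra_simps power2_eq_square)
  then have "[:-r, 1:] dvd [:d, -t, 1:]" using poly_eq_0_iff_dvd by blast
  then obtain k where k: "[:d, -t, 1:] = [:-r, 1:] * k" by (elim dvdE)
  then have u: "is_unit [:-r, 1:] \<or> is_unit k" using assms by (simp add: irreducible_def)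
  have nu: "\<not> is_unit [:-r, 1:]" by (simp add: is_unit_iff_degree)
  have k0: "k \<noteq> 0" using k by auto
  have "degree ([:-r, 1:] * k) = degree [:-r, 1:] + degree k"
    using k0 degree_mult_eq[of "[:-r, 1:]" k] by simp
  moreover have "degree [:d, -t, 1:] = 2" by simp
  ultimately have "degree k = 1" using k by (simp del: mult_pCons_left)
  then have "\<not> is_unit k" using is_unit_iff_degree[OF k0] by simp
  then show False using u nu by blast
qed

lemma root_transfer:
  assumes "regular_elliptic h" "y \<in> conj_class h" "Z \<in> y" "r^2 - mtr Z * r + mdet Z = 0"
  shows False
proof -
  have h: "h \<in> PGL2" and irr: "irreducible [:mdet (rep h), - mtr (rep h), 1:]"
    using assms(1) by (auto simp: regular_elliptic_def)
  obtain s where s: "s \<noteq> 0" "mtr Z = s * mtr (rep h)" "mdet Z = s^2 * mdet (rep h)"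
    using char_sim[OF h assms(2,3)] by blast
  have "(r/s)^2 - mtr (rep h) * (r/s) + mdet (rep h) = (r^2 - mtr Z * r + mdet Z) / s^2"
    using s by (simp add: field_simps power2_eq_square)
  then have "(r/s)^2 - mtr (rep h) * (r/s) + mdet (rep h) = 0" using assms(4) by simp
  then show False using irr_no_root[OF irr] by blast
qed

context NA begin

lemma vpow2: "s \<noteq> 0 \<Longrightarrow> v (s^2) = 2 * v s" using vmul[of s s] by (simp add: power2_eq_square)

lemma bound:
  assumes re: "regular_elliptic h" and y: "y \<in> conj_class h" and N: "N \<in> y" and G: "N \<in> Gamma_lift v d"
  shows "int d \<le> v ((mtr (rep h))^2 - 4 * mdet (rep h)) - v (mdet (rep h))"
proof (rule ccontr)
  define I0 where "I0 = v ((mtr (rep h))^2 - 4 * mdet (rep h)) - v (mdet (rep h))"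
  assume "\<not> int d \<le> v ((mtr (rep h))^2 - 4 * mdet (rep h)) - v (mdet (rep h))"
  then have dI: "I0 < int d" by (simp add: I0_def)
  have h: "h \<in> PGL2" and disc: "(mtr (rep h))^2 \<noteq> 4 * mdet (rep h)"
    using re by (auto simp: regular_elliptic_def)
  have dR: "mdet (rep h) \<noteq> 0" using rep_det h by blast
  obtain a b c e where Ne: "N = (a,b,c,e)" by (cases N rule: prod_cases4)
  have g: "a \<in> Pideal v 0" "b \<in> Pideal v 0" "c \<in> Pideal v (int d)" "e \<in> Pideal v 0" "a*e - b*c \<in> Ounits v"
    using G by (auto simp: Ne GLm)
  obtain s where s: "s \<noteq> 0" "mtr N = s * mtr (rep h)" "mdet N = s^2 * mdet (rep h)"
    using char_sim[OF h y N] by blast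
  define dN where "dN = (a+e)^2 - 4*(a*e - b*c)"
  have dN: "dN = s^2 * ((mtr (rep h))^2 - 4 * mdet (rep h))"
    using s by (simp add: Ne dN_def power_mult_distrib algebra_simps)
  have dRn: "(mtr (rep h))^2 - 4 * mdet (rep h) \<noteq> 0" using disc by simp
  have dN0: "dN \<noteq> 0" using dN s dRn by simp
  have "v (a*e - b*c) = 0" using g by (simp add: Ounits_def)
  then have "v (s^2 * mdet (rep h)) = 0" using s by (simp add: Ne)
  then have "2 * v s + v (mdet (rep h)) = 0" using vmul[of "s^2" "mdet (rep h)"] vpow2 s dR by simp
  moreover have "v dN = 2 * v s + v ((mtr (rep h))^2 - 4 * mdet (rep h))"
    using dN vmul[of "s^2"] vpow2 s dRn by simp
  ultimately have vdN: "v dN = I0" by (simp add: I0_def)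
  have "b * c \<in> Pideal v (0 + int d)" using P_mult[OF g(2) g(3)] .
  then have "4 * (b * c) \<in> Pideal v (0 + int d)" using P_mult[OF P_numeral] by fastforce
  then have m4: "- (4 * (b * c)) \<in> Pideal v (int d)" by simp
  have sq: "(a - e)^2 = dN + - (4 * (b * c))" by (simp add: dN_def power2_eq_square algebra_simps)
  have "dN + - (4 * (b * c)) \<noteq> 0 \<and> v (dN + - (4 * (b * c))) = v dN"
    using strict_ultra[OF dN0 _ m4] vdN dI by simp
  then have ae0: "a - e \<noteq> 0" and vae: "v ((a - e)^2) = I0" using sq vdN by auto
  define m where "m = v (2*e - (a+e))"
  have ea: "2*e - (a+e) = - (a - e)" by simp
  have "v ((a-e)^2) = 2 * v (a - e)" using vpow2 ae0 by blast
  moreover have "v (2*e - (a+e)) = v (a - e)" unfolding ea by (rule vneg)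
  ultimately have m2: "2 * m = I0" using vae by (simp add: m_def)
  have f0: "e^2 - (a+e)*e + (a*e - b*c) = - (b*c)" by (simp add: power2_eq_square algebra_simps)
  have bcd: "- (b*c) \<in> Pideal v (int d)" using P_mult[OF g(2) g(3)] by simp
  have "- (b*c) \<in> Pideal v (2*m+1)" using P_mono[OF _ bcd] m2 dI by simp
  then have "e^2 - (a+e)*e + (a*e - b*c) \<in> Pideal v (2*m+1)" unfolding f0 .
  then obtain r where r: "r^2 - (a+e)*r + (a*e - b*c) = 0"
    using hensel[of e "a+e" m "a*e - b*c"] ae0 m_def by auto
  show False using root_transfer[OF re y N, of r] r by (simp add: Ne)
qed

end


context HX begin

lemma vanish:
  assumes re: "regular_elliptic h" and disj: "conj_class h \<inter> Gamma v D = {}"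
    and y: "y \<in> conj_class h"
  shows "\<phi> y = 0"
proof (rule ccontr)
  assume nz: "\<phi> y \<noteq> 0"
  have h: "h \<in> PGL2" using re by (simp add: regular_elliptic_def)
  have yP: "y \<in> PGL2" using conj_class_PGL2[OF h y] .
  define Y where "Y = rep y"
  have dY: "mdet Y \<noteq> 0" using rep_det yP by (simp add: Y_def)
  have cY: "cls Y = y" using cls_rep yP by (simp add: Y_def)
  obtain a b c e where Ye: "Y = (a,b,c,e)" by (cases Y rule: prod_cases4)
  have "PP Y" using GEN[of a e b c] dY by (simp add: Ye)
  then have "DCm Y" using nz cY by (simp add: PP_def)
  then obtain G1 G2 a' e' where d: "G1 \<in> Gamma_lift v D" "G2 \<in> Gamma_lift v D" "a' \<noteq> 0" "e' \<noteq> 0"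
      "Y = mmul (mmul G1 (a',0,0,e')) G2" unfolding DCm_def by blast
  define G where "G = mmul G2 G1"
  have G: "G \<in> Gamma_lift v D" using GL_mmul d by (simp add: G_def)
  define N where "N = mmul G (a',0,0,e')"
  have "mmul (mmul G2 Y) (madj G2) = mmul (mmul G2 G1) (mmul (a',0,0,e') (mmul G2 (madj G2)))"
    by (simp only: d(5) mmul_assoc)
  also have "\<dots> = mmul (mmul G2 G1) (msc (mdet G2) (a',0,0,e'))"
    by (simp only: mmul_madj mmul_msc_r mmul_id_r)
  also have "\<dots> = msc (mdet G2) N" by (simp only: mmul_msc_r N_def G_def)
  finally have "mmul (mmul G2 Y) (madj G2) = msc (mdet G2) N" .
  then have "gconj (cls G2) y = cls N"
    using cY gconj_cls[of G2 Y] cls_msc GL_det_ne[OF d(2)] by metis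
  moreover have "cls G2 \<in> PGL2" using cls_PGL2 GL_det_ne[OF d(2)] by blast
  ultimately have NO: "cls N \<in> conj_class h" using conj_class_closed[OF h y] by metis
  obtain g1 g2 g3 g4 where Ge: "G = (g1,g2,g3,g4)" by (cases G rule: prod_cases4)
  have g: "g1 \<in> Pideal v 0" "g2 \<in> Pideal v 0" "g3 \<in> Pideal v (int D)" "g4 \<in> Pideal v 0" "g1*g4 - g2*g3 \<in> Ounits v"
    using G by (auto simp: Ge GLm)
  have pu: "g1 \<in> Ounits v" using GL_fst_unit[OF G D1] by (simp add: Ge)
  have su: "g4 \<in> Ounits v" using GL_snd_unit[OF G[unfolded Ge] D1] .
  have Ne: "N = (g1*a', g2*e', g3*a', g4*e')" by (simp add: N_def Ge)
  define k where "k = a' / e'"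
  have k0: "k \<noteq> 0" using d by (simp add: k_def)
  define N1 where "N1 = (g1*k, g2, g3*k, g4)"
  have N1: "N1 \<in> cls N"
    unfolding in_cls using d by (intro exI[of _ "1/e'"]) (simp add: Ne N1_def k_def)
  define N2 where "N2 = (g1, g2*(1/k), g3, g4*(1/k))"
  have N2: "N2 \<in> cls N"
    unfolding in_cls using d by (intro exI[of _ "1/a'"]) (simp add: Ne N2_def k_def)
  consider "v k = 0" | "v k > 0" | "v k < 0" by linarith
  then show False
  proof cases
    case 1
    then have ku: "k \<in> Ounits v" using k0 by (simp add: Ounits_def)
    have kO: "k \<in> Pideal v 0" using Ounits_O[OF ku] .
    have "g1*k*g4 - g2*(g3*k) = k * (g1*g4 - g2*g3)" by (simp add: algebra_simps)
    then have "g1*k*g4 - g2*(g3*k) \<in> Ounits v" using Ounits_mult[OF ku g(5)] by simp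
    then have "N1 \<in> Gamma_lift v D" unfolding N1_def GLm
      using g kO P_intoO by (simp add: mult.commute[of g3 k] P_Ointo)
    then have "cls N1 \<in> Gamma v D" by (rule cls_Gamma)
    moreover have "cls N1 = cls N"
    proof -
      obtain t where "t \<noteq> 0" "N1 = msc t N" using N1 by (auto simp: in_cls)
      then show ?thesis using cls_msc by metis
    qed
    ultimately show False using disj NO by auto
  next
    case 2
    then have kP: "k \<in> Pideal v 1" by (simp add: Pideal_def)
    have "g4 + g1*k \<in> Ounits v" using unit_plus_P[OF su P_Ointo[OF g(1) kP]] .
    moreover have "2*0 - (g1*k + g4) = - (g4 + g1*k)" by simp
    ultimately have T: "2*0 - (g1*k + g4) \<noteq> 0 \<and> v (2*0 - (g1*k + g4)) = 0"
      by (simp only: vneg neg_equal_0_iff_equal) (simp add: Ounits_def)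
    have "k * (g1*g4 - g2*g3) \<in> Pideal v 1" using P_intoO[OF kP Ounits_O[OF g(5)]] .
    moreover have "k * (g1*g4 - g2*g3) = g1*k*g4 - g2*(g3*k)" by (simp add: algebra_simps)
    ultimately have "0^2 - (g1*k + g4)*0 + (g1*k*g4 - g2*(g3*k)) \<in> Pideal v (2*0+1)" by simp
    then obtain t where "t^2 - (g1*k + g4)*t + (g1*k*g4 - g2*(g3*k)) = 0"
      using hensel[of 0 "g1*k + g4" 0 "g1*k*g4 - g2*(g3*k)"] T by blast
    then show False using root_transfer[OF re NO N1, of t] by (simp add: N1_def)
  next
    case 3
    have ki: "v (1/k) > 0" using 3 k0 vdiv[of 1 k] v1 by simp
    then have kP: "1/k \<in> Pideal v 1" by (simp add: Pideal_def)
    have "g1 + g4*(1/k) \<in> Ounits v" using unit_plus_P[OF pu P_Ointo[OF g(4) kP]] .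
    moreover have "2*0 - (g1 + g4*(1/k)) = - (g1 + g4*(1/k))" by simp
    ultimately have T: "2*0 - (g1 + g4*(1/k)) \<noteq> 0 \<and> v (2*0 - (g1 + g4*(1/k))) = 0"
      by (simp only: vneg neg_equal_0_iff_equal) (simp add: Ounits_def)
    have "(1/k) * (g1*g4 - g2*g3) \<in> Pideal v 1" using P_intoO[OF kP Ounits_O[OF g(5)]] .
    moreover have "(1/k) * (g1*g4 - g2*g3) = g1*(g4*(1/k)) - g2*(1/k)*g3" by (simp add: algebra_simps)
    ultimately have "0^2 - (g1 + g4*(1/k))*0 + (g1*(g4*(1/k)) - g2*(1/k)*g3) \<in> Pideal v (2*0+1)" by simp
    then obtain t where "t^2 - (g1 + g4*(1/k))*t + (g1*(g4*(1/k)) - g2*(1/k)*g3) = 0"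
      using hensel[of 0 "g1 + g4*(1/k)" 0 "g1*(g4*(1/k)) - g2*(1/k)*g3"] T by blast
    then show False using root_transfer[OF re NO N2, of t] by (simp add: N2_def)
  qed
qed

end


theorem corollary7p3:
  fixes v :: "'f::field \<Rightarrow> int"
    and M :: "'f mat2 set measure"
    and x :: "'f \<Rightarrow> complex"
    and \<Omega> :: "'f mat2 set set"
    and \<phi> :: "'f mat2 set \<Rightarrow> complex"
  assumes "nonarch_local_field v"
    and "haar_measure v M"
    and "regular_elliptic_class \<Omega>"
    and "smooth_char v x"
    and "dchar v x > dclass v \<Omega>"
    and "\<phi> \<in> Hprime v x"
  shows "\<forall>h\<in>\<Omega>. orbital_integral M h \<phi> = 0"
proof -
  interpret NA v by unfold_locales (rule assms(1))
  define D where "D = dchar v x"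
  have D1: "1 \<le> D" using assms(5) by (simp add: D_def)
  have sc: "\<forall>a\<in>Ounits v. \<forall>b\<in>Ounits v. x (a*b) = x a * x b" "\<forall>a\<in>Ounits v. x a \<noteq> 0"
    using assms(4) by (auto simp: smooth_char_def)
  have "D - 1 < (LEAST r. \<forall>u\<in>Ugrp v r. (x u)\<^sup>2 = 1)" using D1 by (simp add: D_def dchar_def)
  then have "\<not> (\<forall>u\<in>Ugrp v (D - 1). (x u)\<^sup>2 = 1)" by (rule not_less_Least)
  then obtain u where u: "u \<in> Ugrp v (D - 1)" "(x u)^2 \<noteq> 1" by blast
  have uu: "u \<in> Ounits v" "u - 1 \<in> Pideal v (int (D - 1))" using u by (auto simp: Ugrp_def)
  have "int (D - 1) = int D - 1" using D1 by simp
  then have zP: "u - 1 \<in> Pideal v (int D - 1)" using uu by simp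
  have hp: "\<forall>\<gamma>\<in>Gamma v D. \<forall>g\<in>PGL2. \<phi> (gmul \<gamma> g) = xtilde v x D \<gamma> * \<phi> g \<and> \<phi> (gmul g \<gamma>) = xtilde v x D \<gamma> * \<phi> g"
    using assms(6) by (simp add: Hprime_def D_def)
  interpret HX v x \<phi> D "u - 1"
    by unfold_locales (use D1 sc zP uu u hp in auto)
  obtain h where re: "regular_elliptic h" and Om: "\<Omega> = conj_class h"
    using assms(3) by (auto simp: regular_elliptic_class_def)
  have hP: "h \<in> PGL2" using re by (simp add: regular_elliptic_def)
  define B where "B = nat (v ((mtr (rep h))^2 - 4 * mdet (rep h)) - v (mdet (rep h)))"
  have bnd: "d \<le> B" if ne: "\<Omega> \<inter> Gamma v d \<noteq> {}" for d
  proof -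
    obtain y where y: "y \<in> \<Omega>" "y \<in> Gamma v d" using ne by blast
    then obtain N where N: "N \<in> Gamma_lift v d" "y = cls N" by (auto simp: Gamma_def)
    have "int d \<le> v ((mtr (rep h))^2 - 4 * mdet (rep h)) - v (mdet (rep h))"
      using bound[OF re _ _ N(1)] y(1) N(2) mem_cls Om by blast
    then show ?thesis by (simp add: B_def)
  qed
  have disj: "conj_class h \<inter> Gamma v D = {}"
  proof (rule ccontr)
    assume "conj_class h \<inter> Gamma v D \<noteq> {}"
    then have "D \<le> (GREATEST d. \<Omega> \<inter> Gamma v d \<noteq> {})"
      using Greatest_le_nat[of "\<lambda>d. \<Omega> \<inter> Gamma v d \<noteq> {}" D B] bnd Om by blast
    then show False using assms(5) by (simp add: D_def dclass_def)
  qed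
  have van: "\<phi> y = 0" if "y \<in> conj_class h" for y using vanish[OF re disj that] .
  have sp: "space M = PGL2" using assms(2) by (simp add: haar_measure_def)
  show ?thesis
  proof
    fix h' assume h': "h' \<in> \<Omega>"
    have "orbital_integral M h' \<phi> = integral\<^sup>L M (\<lambda>g. 0)"
      unfolding orbital_integral_def
    proof (rule Bochner_Integration.integral_cong[OF refl])
      fix g assume "g \<in> space M"
      then have "gconj g h' \<in> conj_class h" using conj_class_closed[OF hP] h' Om sp by auto
      then show "\<phi> (gconj g h') = 0" by (rule van)
    qed
    then show "orbital_integral M h' \<phi> = 0" by simp
  qed
qed


end
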